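(* Let $X_c$ be a Banach space, $A_c\in\mathcal L(X_c,X_c)$ invertible, and let $L_g\ge0$, $0\le L_c<1$, with $L_r,L_t,L_{-1}$ defined below, and assume $L_r<\|A_c^{-1}\|^{-1}$. Let $r,\tilde r\in C^2_b(X_c,X_c)$ with $\|Dr\|_0\le L_r$ and $\|D\tilde r\|_0\le L_r$. Let $X,Y$ be Banach spaces, $h\in C^2_b(Y,X)$ and $f_1,f_2\in C^2_b(X_c,Y)$. Then: (i) $\|h\circ f_1\circ(A_c+r)^{-1}-h\circ f_2\circ(A_c+\tilde r)^{-1}\|_0\le\|Dh\|_0\big(\|f_1-f_2\|_0+L_{-1}\|Df_2\|_0\|r-\tilde r\|_0\big)$. (ii) If moreover $\|D^2\tilde r\|_0\le\delta$ for some $\delta>0$, then $\|D[h\circ f_1\circ(A_c+r)^{-1}]-D[h\circ f_2\circ(A_c+\tilde r)^{-1}]\|_0\le L_{-1}\big(\|Dh\|_0+\|D^2h\|_0\|Df_2\|_0\big)\|f_1-f_2\|_1+L_{-1}^2\big(\|D^2h\|_0\|Df_2\|_0^2+\|Dh\|_0\|D^2f_2\|_0\big)\|r-\tilde r\|_1+L_{-1}^2\|Dh\|_0\|Df_1\|_0(1+L_{-1}\delta)\|r-\tilde r\|_1$.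
   Context: $\mathcal L(Y,Z)$ denotes bounded linear operators with operator norm. $C^k_b(Y,Z)$ is the Banach space of $C^k$ maps $f:Y\to Z$ with $\|f\|_k:=\max_{0\le j\le k}\sup_y\|D^jf(y)\|<\infty$. Constants: $L_r:=\frac{L_g+L_c(2\|A_c\|+L_g)}{1-L_c}$, $L_t:=\frac{\|A_c^{-1}\|^2L_r}{1-\|A_c^{-1}\|L_r}$, $L_{-1}:=\|A_c^{-1}\|+L_t$. (Under these hypotheses $A_c+r$ and $A_c+\tilde r$ are global diffeomorphisms of $X_c$.) *)

theory Defs
  imports "HOL-Analysis.Analysis"
begin

definition Dop :: "('a::real_normed_vector \<Rightarrow> 'b::real_normed_vector) \<Rightarrow> 'a \<Rightarrow> ('a \<Rightarrow>\<^sub>L 'b)" where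
  "Dop f x = Blinfun (frechet_derivative f (at x))"

definition supn :: "('a \<Rightarrow> 'b::real_normed_vector) \<Rightarrow> real" where
  "supn f = (SUP x. norm (f x))"

definition norm1 :: "('a::real_normed_vector \<Rightarrow> 'b::real_normed_vector) \<Rightarrow> real" where
  "norm1 f = max (supn f) (supn (Dop f))"

definition C2b :: "('a::real_normed_vector \<Rightarrow> 'b::real_normed_vector) \<Rightarrow> bool" where
  "C2b f \<longleftrightarrow> (\<forall>x. f differentiable (at x)) \<and> (\<forall>x. Dop f differentiable (at x))
     \<and> continuous_on UNIV (Dop (Dop f))
     \<and> bounded (range f) \<and> bounded (range (Dop f)) \<and> bounded (range (Dop (Dop f)))"

definition Lr_const :: "real \<Rightarrow> real \<Rightarrow> real \<Rightarrow> real" where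
  "Lr_const Lg Lc nA = (Lg + Lc * (2 * nA + Lg)) / (1 - Lc)"

definition Lt_const :: "real \<Rightarrow> real \<Rightarrow> real" where
  "Lt_const nAi Lr = (nAi^2 * Lr) / (1 - nAi * Lr)"

definition Lm1_const :: "real \<Rightarrow> real \<Rightarrow> real" where
  "Lm1_const nAi Lr = nAi + Lt_const nAi Lr"

end

theory Submission imports Defs begin

lemma supn_ge: "bounded (range f) \<Longrightarrow> norm (f x) \<le> supn f"
  unfolding supn_def
  by (rule cSUP_upper) (auto simp: bounded_iff bdd_above_def)

lemma supn_le: "(\<And>x. norm (f x) \<le> B) \<Longrightarrow> supn f \<le> B"
  unfolding supn_def by (rule cSUP_least) auto

lemma supn_nonneg: "bounded (range f) \<Longrightarrow> 0 \<le> supn f"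
  using supn_ge[of f undefined] norm_ge_zero order_trans by blast

lemma bounded_diff_range:
  fixes f g :: "'a \<Rightarrow> 'b::real_normed_vector"
  assumes "bounded (range f)" "bounded (range g)"
  shows "bounded (range (\<lambda>x. f x - g x))"
proof -
  obtain B1 where B1: "\<And>x. norm (f x) \<le> B1" using assms(1) by (auto simp: bounded_iff)
  obtain B2 where B2: "\<And>x. norm (g x) \<le> B2" using assms(2) by (auto simp: bounded_iff)
  have "norm (f x - g x) \<le> B1 + B2" for x
    using norm_triangle_ineq4[of "f x" "g x"] B1[of x] B2[of x] by linarith
  then show ?thesis by (auto simp: bounded_iff)
qed

lemma Dop_works:
  assumes "f differentiable (at x)"
  shows "(f has_derivative blinfun_apply (Dop f x)) (at x)"
proof -
  have d: "(f has_derivative frechet_derivative f (at x)) (at x)"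
    using assms frechet_derivative_works by blast
  then have "bounded_linear (frechet_derivative f (at x))" by (rule has_derivative_bounded_linear)
  then show ?thesis using d unfolding Dop_def by (simp add: bounded_linear_Blinfun_apply)
qed

lemma Dop_eq:
  assumes "(f has_derivative F) (at x)"
  shows "Dop f x = Blinfun F"
  unfolding Dop_def using frechet_derivative_at[OF assms] by simp

lemma Dop_diff:
  assumes "\<forall>x. f differentiable (at x)" "\<forall>x. g differentiable (at x)"
  shows "Dop (\<lambda>x. f x - g x) x = Dop f x - Dop g x"
proof -
  have "((\<lambda>x. f x - g x) has_derivative (\<lambda>v. Dop f x v - Dop g x v)) (at x)"
    using Dop_works assms by (auto intro!: has_derivative_diff)
  then have "Dop (\<lambda>x. f x - g x) x = Blinfun (\<lambda>v. Dop f x v - Dop g x v)" by (rule Dop_eq)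
  also have "\<dots> = Dop f x - Dop g x"
    by (rule blinfun_eqI) (simp add: bounded_linear_Blinfun_apply blinfun.bounded_linear_right[of "Dop f x - Dop g x", simplified minus_blinfun.rep_eq] blinfun.diff_left)
  finally show ?thesis .
qed

lemma mvt:
  fixes f :: "'a::real_normed_vector \<Rightarrow> 'b::real_normed_vector"
  assumes "\<forall>x. f differentiable (at x)" "\<And>x. norm (Dop f x) \<le> B"
  shows "norm (f x - f y) \<le> B * norm (x - y)"
  apply (rule differentiable_bound[of UNIV f "\<lambda>x. blinfun_apply (Dop f x)"])
  using assms Dop_works by (auto simp: norm_blinfun.rep_eq[symmetric])


lemma inverse_lip:
  fixes A Ai :: "'c::banach \<Rightarrow>\<^sub>L 'c" and q :: "'c \<Rightarrow> 'c"
  assumes inv1: "A o\<^sub>L Ai = id_blinfun" and inv2: "Ai o\<^sub>L A = id_blinfun"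
    and L: "0 \<le> L" "norm Ai * L < 1"
    and lip: "\<And>x y. norm (q x - q y) \<le> L * norm (x - y)"
  shows "bij (\<lambda>x. A x + q x)"
    and "\<And>x y. norm (x - y) \<le> norm Ai / (1 - norm Ai * L) * norm ((A x + q x) - (A y + q y))"
proof -
  have AAi: "A (Ai z) = z" for z using inv1 by (metis blinfun_apply_blinfun_compose id_blinfun.rep_eq)
  have AiA: "Ai (A z) = z" for z using inv2 by (metis blinfun_apply_blinfun_compose id_blinfun.rep_eq)
  let ?a = "norm Ai"
  have a0: "0 \<le> ?a" by simp
  have est: "norm (x - y) \<le> ?a / (1 - ?a * L) * norm ((A x + q x) - (A y + q y))" for x y
  proof -
    have "x - y = Ai ((A x + q x) - (A y + q y)) - Ai (q x - q y)"
      by (simp add: AiA blinfun.diff_right blinfun.add_right)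
    then have "norm (x - y) \<le> norm (Ai ((A x + q x) - (A y + q y))) + norm (Ai (q x - q y))"
      by (metis norm_triangle_ineq4)
    also have "\<dots> \<le> ?a * norm ((A x + q x) - (A y + q y)) + ?a * (L * norm (x - y))"
      by (intro add_mono order_trans[OF norm_blinfun] mult_left_mono lip a0) auto
    finally have "(1 - ?a * L) * norm (x - y) \<le> ?a * norm ((A x + q x) - (A y + q y))"
      by (simp add: algebra_simps)
    then show ?thesis using L by (simp add: field_simps)
  qed
  then show "\<And>x y. norm (x - y) \<le> ?a / (1 - ?a * L) * norm ((A x + q x) - (A y + q y))" .
  have "inj (\<lambda>x. A x + q x)"
  proof (rule injI)
    fix x y assume "A x + q x = A y + q y"
    then show "x = y" using est[of x y] by simp
  qed
  moreover have "surj (\<lambda>x. A x + q x)"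
  proof -
    { fix y
      have "\<exists>!x. Ai (y - q x) = x"
      proof (rule banach_fix_type[of "?a * L"])
        show "0 \<le> ?a * L" using L by simp
        show "?a * L < 1" using L by simp
        show "\<forall>x z. dist (Ai (y - q x)) (Ai (y - q z)) \<le> ?a * L * dist x z"
        proof (intro allI)
          fix x z
          have "dist (Ai (y - q x)) (Ai (y - q z)) = norm (Ai (q z - q x))"
            by (simp add: dist_norm blinfun.diff_right[symmetric])
          also have "\<dots> \<le> ?a * norm (q z - q x)" by (rule norm_blinfun)
          also have "\<dots> \<le> ?a * (L * norm (z - x))" by (intro mult_left_mono lip a0)
          finally show "dist (Ai (y - q x)) (Ai (y - q z)) \<le> ?a * L * dist x z"
            by (simp add: dist_norm norm_minus_commute mult.assoc)
        qed
      qed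
      then obtain x where "Ai (y - q x) = x" by blast
      then have "A x = y - q x" using AAi by metis
      then have "y \<in> range (\<lambda>x. A x + q x)" by (auto intro!: image_eqI[of _ _ x])
    }
    then show ?thesis by blast
  qed
  ultimately show "bij (\<lambda>x. A x + q x)" by (simp add: bij_def)
qed


lemma DG:
  fixes Ac Ai :: "'c::banach \<Rightarrow>\<^sub>L 'c" and q :: "'c \<Rightarrow> 'c"
    and h :: "'y::real_normed_vector \<Rightarrow> 'x::real_normed_vector" and f :: "'c \<Rightarrow> 'y"
  assumes inv1: "Ac o\<^sub>L Ai = id_blinfun" and inv2: "Ai o\<^sub>L Ac = id_blinfun"
    and L: "0 \<le> L" "norm Ai * L < 1"
    and qd: "\<forall>x. q differentiable (at x)" and Dq: "\<And>x. norm (Dop q x) \<le> L"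
    and hd: "\<forall>x. h differentiable (at x)" and fd: "\<forall>x. f differentiable (at x)"
  shows "\<exists>Mi. Dop (\<lambda>z. h (f (inv (\<lambda>x. Ac x + q x) z))) y
      = Dop h (f (inv (\<lambda>x. Ac x + q x) y)) o\<^sub>L Dop f (inv (\<lambda>x. Ac x + q x) y) o\<^sub>L Mi
     \<and> norm Mi \<le> norm Ai / (1 - norm Ai * L)
     \<and> (\<forall>v. Mi (Ac v + Dop q (inv (\<lambda>x. Ac x + q x) y) v) = v)
     \<and> (\<forall>w. Ac (Mi w) + Dop q (inv (\<lambda>x. Ac x + q x) y) (Mi w) = w)"
proof -
  define F where "F = (\<lambda>x. Ac x + q x)"
  define Phi where "Phi = inv F"
  define K where "K = norm Ai / (1 - norm Ai * L)"
  have K0: "0 \<le> K" unfolding K_def using L by simp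
  have lipq: "norm (q a - q b) \<le> L * norm (a - b)" for a b
    by (rule mvt[OF qd Dq])
  note IL = inverse_lip[OF inv1 inv2 L lipq]
  have bijF: "bij F" using IL(1) unfolding F_def .
  have FPhi: "F (Phi z) = z" for z unfolding Phi_def using bijF by (simp add: bij_is_surj surj_f_inv_f)
  have lipPhi: "norm (Phi a - Phi b) \<le> K * norm (a - b)" for a b
    using IL(2)[of "Phi a" "Phi b"] FPhi[of a] FPhi[of b] unfolding F_def K_def by simp
  have contPhi: "continuous (at y) Phi"
  proof -
    have "K-lipschitz_on UNIV Phi"
      by (rule lipschitz_onI) (use lipPhi K0 in \<open>auto simp: dist_norm\<close>)
    then have "continuous_on UNIV Phi" by (rule lipschitz_on_continuous_on)
    then show ?thesis by (simp add: continuous_on_eq_continuous_at)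
  qed
  define x where "x = Phi y"
  define m where "m = (\<lambda>v. Ac v + Dop q x v)"
  have lipD: "norm (Dop q x a - Dop q x b) \<le> L * norm (a - b)" for a b
    using norm_blinfun[of "Dop q x" "a - b"] Dq[of x]
    by (simp add: blinfun.diff_right) (meson mult_right_mono norm_ge_zero order_trans)
  note IM = inverse_lip[OF inv1 inv2 L lipD]
  have bijm: "bij m" using IM(1) unfolding m_def .
  define mi where "mi = inv m"
  have mmi: "m (mi w) = w" for w unfolding mi_def using bijm by (simp add: bij_is_surj surj_f_inv_f)
  have mim: "mi (m v) = v" for v unfolding mi_def using bijm by (simp add: bij_is_inj)
  have madd: "m (a + b) = m a + m b" for a b unfolding m_def by (simp add: blinfun.add_right)
  have mscale: "m (c *\<^sub>R a) = c *\<^sub>R m a" for c a unfolding m_def by (simp add: blinfun.scaleR_right scaleR_add_right)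
  have m0: "m 0 = 0" unfolding m_def by simp
  have minorm: "norm (mi w) \<le> K * norm w" for w
    using IM(2)[of "mi w" 0] mmi[of w] m0 unfolding m_def K_def by simp
  have mi_add: "mi (a + b) = mi a + mi b" for a b
    by (metis madd mim mmi)
  have mi_scale: "mi (c *\<^sub>R a) = c *\<^sub>R mi a" for c a
    by (metis mscale mim mmi)
  have blmi: "bounded_linear mi"
    by (rule bounded_linear_intro[where K=K]) (auto simp: mi_add mi_scale minorm mult.commute)
  have derF: "(F has_derivative m) (at (Phi y))"
    unfolding F_def m_def x_def
    by (intro has_derivative_add bounded_linear_imp_has_derivative Dop_works) (auto simp: qd blinfun.bounded_linear_right)
  have derPhi: "(Phi has_derivative mi) (at y)"
    by (rule has_derivative_inverse_basic[OF derF blmi _ contPhi open_UNIV UNIV_I FPhi])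
       (auto simp: mim)
  have derG: "((\<lambda>z. h (f (Phi z))) has_derivative (\<lambda>v. Dop h (f x) (Dop f x (mi v)))) (at y)"
  proof -
    have "(f has_derivative Dop f x) (at (Phi y))" using Dop_works fd x_def by blast
    moreover have "(h has_derivative Dop h (f x)) (at (f (Phi y)))" using Dop_works hd x_def by blast
    ultimately have "((f \<circ> Phi) has_derivative (Dop f x \<circ> mi)) (at y)"
      "(h has_derivative Dop h (f x)) (at ((f \<circ> Phi) y))"
      using derPhi diff_chain_at by auto
    from diff_chain_at[OF this] show ?thesis by (simp add: o_def)
  qed
  define Mi where "Mi = Blinfun mi"
  have Miapp: "blinfun_apply Mi = mi" unfolding Mi_def using blmi by (simp add: bounded_linear_Blinfun_apply)
  have "Dop (\<lambda>z. h (f (Phi z))) y = Blinfun (\<lambda>v. Dop h (f x) (Dop f x (mi v)))"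
    by (rule Dop_eq[OF derG])
  also have "\<dots> = Dop h (f x) o\<^sub>L Dop f x o\<^sub>L Mi"
    by (rule blinfun_eqI) (simp add: Miapp bounded_linear_Blinfun_apply blmi
        bounded_linear_compose[OF blinfun.bounded_linear_right] bounded_linear_compose[OF bounded_linear_compose[OF blinfun.bounded_linear_right blinfun.bounded_linear_right]])
  finally have e: "Dop (\<lambda>z. h (f (Phi z))) y = Dop h (f x) o\<^sub>L Dop f x o\<^sub>L Mi" .
  have nMi: "norm Mi \<le> K" by (rule norm_blinfun_bound[OF K0]) (simp add: Miapp minorm)
  show ?thesis
    apply (rule exI[of _ Mi])
    using e nMi mim mmi unfolding Miapp Phi_def F_def x_def m_def K_def by auto
qed


lemma app_bound: "norm A \<le> a \<Longrightarrow> norm (blinfun_apply A w) \<le> a * norm w"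
  by (meson mult_right_mono norm_blinfun norm_ge_zero order_trans)

theorem lemma3p7:
  fixes Ac Ai :: "'c::banach \<Rightarrow>\<^sub>L 'c"
    and Lg Lc :: real
    and r rt :: "'c \<Rightarrow> 'c"
    and h :: "'y::banach \<Rightarrow> 'x::banach"
    and f1 f2 :: "'c \<Rightarrow> 'y"
  assumes inv1: "Ac o\<^sub>L Ai = id_blinfun" and inv2: "Ai o\<^sub>L Ac = id_blinfun"
    and Lg: "0 \<le> Lg" and Lc0: "0 \<le> Lc" and Lc1: "Lc < 1"
    and Lr_small: "norm Ai * Lr_const Lg Lc (norm Ac) < 1"
    and r: "C2b r" and rt: "C2b rt"
    and Dr: "supn (Dop r) \<le> Lr_const Lg Lc (norm Ac)"
    and Drt: "supn (Dop rt) \<le> Lr_const Lg Lc (norm Ac)"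
    and h: "C2b h" and f1: "C2b f1" and f2: "C2b f2"
  shows
   "(let Lr = Lr_const Lg Lc (norm Ac); L1 = Lm1_const (norm Ai) Lr;
         Phi = inv (\<lambda>x. Ac x + r x); Psi = inv (\<lambda>x. Ac x + rt x);
         G1 = (\<lambda>x. h (f1 (Phi x))); G2 = (\<lambda>x. h (f2 (Psi x)))
     in supn (\<lambda>x. G1 x - G2 x)
          \<le> supn (Dop h) * (supn (\<lambda>x. f1 x - f2 x) + L1 * supn (Dop f2) * supn (\<lambda>x. r x - rt x))
      \<and> (\<forall>\<delta>>0. supn (Dop (Dop rt)) \<le> \<delta> \<longrightarrow>
           supn (\<lambda>x. Dop G1 x - Dop G2 x)
           \<le> L1 * (supn (Dop h) + supn (Dop (Dop h)) * supn (Dop f2)) * norm1 (\<lambda>x. f1 x - f2 x)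
             + L1^2 * (supn (Dop (Dop h)) * (supn (Dop f2))^2 + supn (Dop h) * supn (Dop (Dop f2)))
                 * norm1 (\<lambda>x. r x - rt x)
             + L1^2 * supn (Dop h) * supn (Dop f1) * (1 + L1 * \<delta>) * norm1 (\<lambda>x. r x - rt x)))"
proof -
  define Lr where "Lr = Lr_const Lg Lc (norm Ac)"
  define a where "a = norm Ai"
  define K where "K = a / (1 - a * Lr)"
  have Lr0: "0 \<le> Lr" unfolding Lr_def Lr_const_def using Lg Lc0 Lc1 by simp
  have aLr: "a * Lr < 1" using Lr_small unfolding a_def Lr_def .
  have a0: "0 \<le> a" unfolding a_def by simp
  have K0: "0 \<le> K" unfolding K_def using aLr a0 by simp
  have L1eq: "Lm1_const (norm Ai) Lr = K"
    unfolding Lm1_const_def Lt_const_def K_def a_def[symmetric] using aLr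
    by (simp add: field_simps power2_eq_square)
  have hd: "\<forall>x. h differentiable (at x)" and hdd: "\<forall>x. Dop h differentiable (at x)"
    and hb: "bounded (range (Dop h))" "bounded (range (Dop (Dop h)))" using h unfolding C2b_def by auto
  have f1d: "\<forall>x. f1 differentiable (at x)" and f1b: "bounded (range f1)" "bounded (range (Dop f1))"
    using f1 unfolding C2b_def by auto
  have f2d: "\<forall>x. f2 differentiable (at x)" and f2dd: "\<forall>x. Dop f2 differentiable (at x)"
    and f2b: "bounded (range f2)" "bounded (range (Dop f2))" "bounded (range (Dop (Dop f2)))"
    using f2 unfolding C2b_def by auto
  have rd: "\<forall>x. r differentiable (at x)" and rb: "bounded (range r)" "bounded (range (Dop r))"
    using r unfolding C2b_def by auto
  have rtd: "\<forall>x. rt differentiable (at x)" and rtdd: "\<forall>x. Dop rt differentiable (at x)"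
    and rtb: "bounded (range rt)" "bounded (range (Dop rt))"
    using rt unfolding C2b_def by auto
  have nDr: "norm (Dop r x) \<le> Lr" for x using supn_ge[OF rb(2)] Dr unfolding Lr_def by (meson order_trans)
  have nDrt: "norm (Dop rt x) \<le> Lr" for x using supn_ge[OF rtb(2)] Drt unfolding Lr_def by (meson order_trans)
  have lipr: "norm (r p - r q) \<le> Lr * norm (p - q)" for p q by (rule mvt[OF rd nDr])
  have liprt: "norm (rt p - rt q) \<le> Lr * norm (p - q)" for p q by (rule mvt[OF rtd nDrt])
  define Phi where "Phi = inv (\<lambda>x. Ac x + r x)"
  define Psi where "Psi = inv (\<lambda>x. Ac x + rt x)"
  have aLr': "norm Ai * Lr < 1" using aLr a_def by simp
  have bij1: "bij (\<lambda>x. Ac x + r x)" by (rule inverse_lip(1)[OF inv1 inv2 Lr0 aLr' lipr])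
  have bij2: "bij (\<lambda>x. Ac x + rt x)" by (rule inverse_lip(1)[OF inv1 inv2 Lr0 aLr' liprt])
  have FPhi: "Ac (Phi y) + r (Phi y) = y" for y
    unfolding Phi_def using bij1 surj_f_inv_f[of "\<lambda>x. Ac x + r x"] by (auto simp: bij_is_surj)
  have FPsi: "Ac (Psi y) + rt (Psi y) = y" for y
    unfolding Psi_def using bij2 surj_f_inv_f[of "\<lambda>x. Ac x + rt x"] by (auto simp: bij_is_surj)
  have AiA: "Ai (Ac z) = z" for z using inv2 by (metis blinfun_apply_blinfun_compose id_blinfun.rep_eq)
  define d0 where "d0 = supn (\<lambda>x. r x - rt x)"
  define d1 where "d1 = supn (Dop (\<lambda>x. r x - rt x))"
  define e0 where "e0 = supn (\<lambda>x. f1 x - f2 x)"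
  define e1 where "e1 = supn (Dop (\<lambda>x. f1 x - f2 x))"
  have bd0: "bounded (range (\<lambda>x. r x - rt x))" by (rule bounded_diff_range[OF rb(1) rtb(1)])
  have Ddr: "Dop (\<lambda>x. r x - rt x) x = Dop r x - Dop rt x" for x by (rule Dop_diff[OF rd rtd])
  have bd1: "bounded (range (Dop (\<lambda>x. r x - rt x)))"
    unfolding Ddr by (rule bounded_diff_range[OF rb(2) rtb(2)])
  have be0: "bounded (range (\<lambda>x. f1 x - f2 x))" by (rule bounded_diff_range[OF f1b(1) f2b(1)])
  have Ddf: "Dop (\<lambda>x. f1 x - f2 x) x = Dop f1 x - Dop f2 x" for x by (rule Dop_diff[OF f1d f2d])
  have be1: "bounded (range (Dop (\<lambda>x. f1 x - f2 x)))"
    unfolding Ddf by (rule bounded_diff_range[OF f1b(2) f2b(2)])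
  have d00: "0 \<le> d0" unfolding d0_def by (rule supn_nonneg[OF bd0])
  have d10: "0 \<le> d1" unfolding d1_def by (rule supn_nonneg[OF bd1])
  have e00: "0 \<le> e0" unfolding e0_def by (rule supn_nonneg[OF be0])
  have e10: "0 \<le> e1" unfolding e1_def by (rule supn_nonneg[OF be1])
  have rd0: "norm (r x - rt x) \<le> d0" for x unfolding d0_def using supn_ge[OF bd0] .
  have PP: "norm (Phi y - Psi y) \<le> K * d0" for y
  proof -
    let ?x = "Phi y" and ?x' = "Psi y"
    have "Ac ?x - Ac ?x' = (rt ?x' - r ?x') + (r ?x' - r ?x)"
      using FPhi[of y] FPsi[of y] by (simp add: algebra_simps)
    then have "?x - ?x' = Ai ((rt ?x' - r ?x') + (r ?x' - r ?x))"
      by (metis AiA blinfun.diff_right)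
    then have "norm (?x - ?x') \<le> a * norm ((rt ?x' - r ?x') + (r ?x' - r ?x))"
      using norm_blinfun[of Ai] a_def by simp
    also have "\<dots> \<le> a * (d0 + Lr * norm (?x - ?x'))"
    proof (rule mult_left_mono[OF _ a0])
      have "norm (rt ?x' - r ?x') \<le> d0" using rd0[of ?x'] by (simp add: norm_minus_commute)
      moreover have "norm (r ?x' - r ?x) \<le> Lr * norm (?x - ?x')"
        using lipr[of ?x' ?x] by (simp add: norm_minus_commute)
      ultimately show "norm ((rt ?x' - r ?x') + (r ?x' - r ?x)) \<le> d0 + Lr * norm (?x - ?x')"
        by (meson add_mono norm_triangle_ineq order_trans)
    qed
    finally have "(1 - a * Lr) * norm (?x - ?x') \<le> a * d0" by (simp add: algebra_simps)
    then show ?thesis unfolding K_def using aLr by (simp add: field_simps)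
  qed
  define Ph where "Ph = supn (Dop h)"
  define Ph2 where "Ph2 = supn (Dop (Dop h))"
  define F1 where "F1 = supn (Dop f1)"
  define F2 where "F2 = supn (Dop f2)"
  define F22 where "F22 = supn (Dop (Dop f2))"
  have Ph0: "0 \<le> Ph" unfolding Ph_def by (rule supn_nonneg[OF hb(1)])
  have Ph20: "0 \<le> Ph2" unfolding Ph2_def by (rule supn_nonneg[OF hb(2)])
  have F10: "0 \<le> F1" unfolding F1_def by (rule supn_nonneg[OF f1b(2)])
  have F20: "0 \<le> F2" unfolding F2_def by (rule supn_nonneg[OF f2b(2)])
  have F220: "0 \<le> F22" unfolding F22_def by (rule supn_nonneg[OF f2b(3)])
  have nDh: "norm (Dop h z) \<le> Ph" for z unfolding Ph_def by (rule supn_ge[OF hb(1)])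
  have nDf1: "norm (Dop f1 z) \<le> F1" for z unfolding F1_def by (rule supn_ge[OF f1b(2)])
  have nDf2: "norm (Dop f2 z) \<le> F2" for z unfolding F2_def by (rule supn_ge[OF f2b(2)])
  have liph: "norm (h p - h q) \<le> Ph * norm (p - q)" for p q by (rule mvt[OF hd nDh])
  have lipf2: "norm (f2 p - f2 q) \<le> F2 * norm (p - q)" for p q by (rule mvt[OF f2d nDf2])
  have lipDh: "norm (Dop h p - Dop h q) \<le> Ph2 * norm (p - q)" for p q
    by (rule mvt[OF hdd]) (simp add: Ph2_def supn_ge[OF hb(2)])
  have lipDf2: "norm (Dop f2 p - Dop f2 q) \<le> F22 * norm (p - q)" for p q
    by (rule mvt[OF f2dd]) (simp add: F22_def supn_ge[OF f2b(3)])
  have part1: "supn (\<lambda>y. h (f1 (Phi y)) - h (f2 (Psi y))) \<le> Ph * (e0 + K * F2 * d0)"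
  proof (rule supn_le)
    fix y
    have "norm (h (f1 (Phi y)) - h (f2 (Psi y))) \<le> Ph * norm (f1 (Phi y) - f2 (Psi y))" by (rule liph)
    also have "\<dots> \<le> Ph * (e0 + K * F2 * d0)"
    proof (rule mult_left_mono[OF _ Ph0])
      have "norm (f1 (Phi y) - f2 (Phi y)) \<le> e0" unfolding e0_def by (rule supn_ge[OF be0])
      moreover have "norm (f2 (Phi y) - f2 (Psi y)) \<le> F2 * (K * d0)"
        using lipf2[of "Phi y" "Psi y"] PP[of y] F20 by (meson mult_left_mono order_trans)
      moreover have "norm (f1 (Phi y) - f2 (Psi y)) \<le> norm (f1 (Phi y) - f2 (Phi y)) + norm (f2 (Phi y) - f2 (Psi y))"
        by (metis diff_add_cancel add_diff_eq norm_triangle_ineq diff_diff_eq2)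
      ultimately show "norm (f1 (Phi y) - f2 (Psi y)) \<le> e0 + K * F2 * d0" by (simp add: algebra_simps)
    qed
    finally show "norm (h (f1 (Phi y)) - h (f2 (Psi y))) \<le> Ph * (e0 + K * F2 * d0)" .
  qed
  define n1f where "n1f = norm1 (\<lambda>x. f1 x - f2 x)"
  define n1r where "n1r = norm1 (\<lambda>x. r x - rt x)"
  have e0n: "e0 \<le> n1f" and e1n: "e1 \<le> n1f" unfolding n1f_def norm1_def e0_def e1_def by auto
  have d0n: "d0 \<le> n1r" and d1n: "d1 \<le> n1r" unfolding n1r_def norm1_def d0_def d1_def by auto
  have part2: "supn (\<lambda>y. Dop (\<lambda>y. h (f1 (Phi y))) y - Dop (\<lambda>y. h (f2 (Psi y))) y)
     \<le> K * (Ph + Ph2 * F2) * n1f + K^2 * (Ph2 * F2^2 + Ph * F22) * n1r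
        + K^2 * Ph * F1 * (1 + K * \<delta>) * n1r"
    if \<delta>0: "\<delta> > 0" and hdel: "supn (Dop (Dop rt)) \<le> \<delta>" for \<delta>
  proof (rule supn_le)
    fix y
    define x where "x = Phi y"
    define x' where "x' = Psi y"
    obtain Mi where Mi: "Dop (\<lambda>y. h (f1 (Phi y))) y = Dop h (f1 x) o\<^sub>L Dop f1 x o\<^sub>L Mi"
      "norm Mi \<le> K" "\<And>v. Mi (Ac v + Dop r x v) = v"
      using DG[OF inv1 inv2 Lr0 aLr' rd nDr hd f1d, of y] unfolding Phi_def[symmetric] x_def K_def a_def
      by blast
    obtain Ni where Ni: "Dop (\<lambda>y. h (f2 (Psi y))) y = Dop h (f2 x') o\<^sub>L Dop f2 x' o\<^sub>L Ni"
      "norm Ni \<le> K" "\<And>w. Ac (Ni w) + Dop rt x' (Ni w) = w"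
      using DG[OF inv1 inv2 Lr0 aLr' rtd nDrt hd f2d, of y] unfolding Psi_def[symmetric] x'_def K_def a_def
      by blast
    have xx: "norm (x - x') \<le> K * d0" unfolding x_def x'_def by (rule PP)
    have ndd: "norm (Dop rt x' - Dop r x) \<le> (1 + K * \<delta>) * n1r"
    proof -
      have "norm (Dop rt x' - Dop rt x) \<le> \<delta> * norm (x' - x)"
        by (rule mvt[OF rtdd]) (meson hdel order_trans supn_ge rt C2b_def)
      also have "\<dots> \<le> \<delta> * (K * n1r)"
        using xx d0n K0 \<delta>0 by (simp add: norm_minus_commute) (meson mult_left_mono order_trans)
      finally have 1: "norm (Dop rt x' - Dop rt x) \<le> \<delta> * (K * n1r)" .
      have "norm (Dop rt x - Dop r x) = norm (Dop (\<lambda>x. r x - rt x) x)"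
        by (simp add: Ddr norm_minus_commute)
      also have "\<dots> \<le> n1r" using supn_ge[OF bd1] d1n unfolding d1_def by (meson order_trans)
      finally have 2: "norm (Dop rt x - Dop r x) \<le> n1r" .
      have "norm (Dop rt x' - Dop r x) \<le> norm (Dop rt x' - Dop rt x) + norm (Dop rt x - Dop r x)"
        by (metis diff_add_cancel add_diff_eq norm_triangle_ineq diff_diff_eq2)
      then show ?thesis using 1 2 by (simp add: algebra_simps)
    qed
    define R where "R = K * (Ph + Ph2 * F2) * n1f + K^2 * (Ph2 * F2^2 + Ph * F22) * n1r
        + K^2 * Ph * F1 * (1 + K * \<delta>) * n1r"
    have "n1f \<ge> 0" "n1r \<ge> 0" using e00 e0n d00 d0n by auto
    then have R0: "0 \<le> R" unfolding R_def using K0 Ph0 Ph20 F10 F20 F220 \<delta>0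
      by (intro add_nonneg_nonneg mult_nonneg_nonneg) auto
    show "norm (Dop (\<lambda>y. h (f1 (Phi y))) y - Dop (\<lambda>y. h (f2 (Psi y))) y) \<le> R"
    proof (rule norm_blinfun_bound[OF R0])
      fix v
      define u1 where "u1 = Mi v"
      define u2 where "u2 = Ni v"
      have nu2: "norm u2 \<le> K * norm v" unfolding u2_def by (rule app_bound[OF Ni(2)])
      have u12: "u1 - u2 = Mi ((Dop rt x' - Dop r x) u2)"
      proof -
        have "Mi v = Mi (Ac u2 + Dop rt x' u2)" using Ni(3) u2_def by simp
        moreover have "u2 = Mi (Ac u2 + Dop r x u2)" using Mi(3) by simp
        ultimately have "u1 - u2 = Mi (Ac u2 + Dop rt x' u2) - Mi (Ac u2 + Dop r x u2)"
          unfolding u1_def by simp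
        also have "\<dots> = Mi ((Dop rt x' - Dop r x) u2)"
          by (simp add: blinfun.diff_right[symmetric] blinfun.diff_left)
        finally show ?thesis .
      qed
      have nu12: "norm (u1 - u2) \<le> K * ((1 + K * \<delta>) * n1r * (K * norm v))"
      proof -
        have "norm (u1 - u2) \<le> K * norm ((Dop rt x' - Dop r x) u2)" unfolding u12 by (rule app_bound[OF Mi(2)])
        also have "\<dots> \<le> K * ((1 + K * \<delta>) * n1r * norm u2)"
          by (rule mult_left_mono[OF app_bound[OF ndd] K0])
        also have "\<dots> \<le> K * ((1 + K * \<delta>) * n1r * (K * norm v))"
          using nu2 K0 \<delta>0 \<open>n1r \<ge> 0\<close> by (intro mult_left_mono) auto
        finally show ?thesis .
      qed
      define T1 where "T1 = Dop h (f1 x) (Dop f1 x (u1 - u2))"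
      define T2 where "T2 = Dop h (f1 x) ((Dop f1 x - Dop f2 x) u2)"
      define T3 where "T3 = (Dop h (f1 x) - Dop h (f2 x)) (Dop f2 x u2)"
      define T4 where "T4 = (Dop h (f2 x) - Dop h (f2 x')) (Dop f2 x u2)"
      define T5 where "T5 = Dop h (f2 x') ((Dop f2 x - Dop f2 x') u2)"
      have split: "blinfun_apply (Dop (\<lambda>y. h (f1 (Phi y))) y - Dop (\<lambda>y. h (f2 (Psi y))) y) v
          = T1 + T2 + T3 + T4 + T5"
        unfolding Mi(1) Ni(1) T1_def T2_def T3_def T4_def T5_def
        by (simp add: blinfun.diff_right blinfun.diff_left u1_def u2_def)
      have b1: "norm T1 \<le> Ph * (F1 * (K * ((1 + K * \<delta>) * n1r * (K * norm v))))"
        unfolding T1_def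
        by (rule order_trans[OF app_bound[OF nDh] mult_left_mono[OF order_trans[OF app_bound[OF nDf1] mult_left_mono[OF nu12 F10]] Ph0]])
      have b2: "norm T2 \<le> Ph * (n1f * (K * norm v))"
      proof -
        have "norm (Dop f1 x - Dop f2 x) \<le> n1f"
          using supn_ge[OF be1, of x] e1n unfolding Ddf e1_def by simp
        then have "norm ((Dop f1 x - Dop f2 x) u2) \<le> n1f * (K * norm v)"
          using app_bound nu2 \<open>n1f \<ge> 0\<close> by (meson mult_left_mono order_trans)
        then show ?thesis unfolding T2_def using app_bound[OF nDh] Ph0 by (meson mult_left_mono order_trans)
      qed
      have nf2u: "norm (Dop f2 x u2) \<le> F2 * (K * norm v)"
        using app_bound[OF nDf2] nu2 F20 by (meson mult_left_mono order_trans)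
      have b3: "norm T3 \<le> (Ph2 * n1f) * (F2 * (K * norm v))"
      proof -
        have "norm (f1 x - f2 x) \<le> n1f" using supn_ge[OF be0, of x] e0n unfolding e0_def by simp
        then have "norm (Dop h (f1 x) - Dop h (f2 x)) \<le> Ph2 * n1f"
          using lipDh Ph20 by (meson mult_left_mono order_trans)
        then show ?thesis unfolding T3_def using app_bound nf2u Ph20 \<open>n1f \<ge> 0\<close>
          by (meson mult_left_mono order_trans mult_nonneg_nonneg)
      qed
      have b4: "norm T4 \<le> (Ph2 * (F2 * (K * n1r))) * (F2 * (K * norm v))"
      proof -
        have "norm (f2 x - f2 x') \<le> F2 * (K * n1r)"
          using lipf2[of x x'] xx d0n F20 K0 by (meson mult_left_mono order_trans)
        then have "norm (Dop h (f2 x) - Dop h (f2 x')) \<le> Ph2 * (F2 * (K * n1r))"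
          using lipDh Ph20 by (meson mult_left_mono order_trans)
        then show ?thesis unfolding T4_def using app_bound nf2u Ph20 F20 K0 \<open>n1r \<ge> 0\<close>
          by (meson mult_left_mono order_trans mult_nonneg_nonneg)
      qed
      have b5: "norm T5 \<le> Ph * ((F22 * (K * n1r)) * (K * norm v))"
      proof -
        have "norm (Dop f2 x - Dop f2 x') \<le> F22 * (K * n1r)"
          using lipDf2[of x x'] xx d0n F220 K0 by (meson mult_left_mono order_trans)
        then have "norm ((Dop f2 x - Dop f2 x') u2) \<le> (F22 * (K * n1r)) * (K * norm v)"
          using app_bound nu2 F220 K0 \<open>n1r \<ge> 0\<close> by (meson mult_left_mono order_trans mult_nonneg_nonneg)
        then show ?thesis unfolding T5_def using app_bound[OF nDh] Ph0 by (meson mult_left_mono order_trans)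
      qed
      have "norm (T1 + T2 + T3 + T4 + T5) \<le> norm T1 + norm T2 + norm T3 + norm T4 + norm T5"
        by (meson add_mono norm_triangle_ineq order_trans order_refl)
      also have "\<dots> \<le> Ph * (F1 * (K * ((1 + K * \<delta>) * n1r * (K * norm v)))) + Ph * (n1f * (K * norm v))
          + (Ph2 * n1f) * (F2 * (K * norm v)) + (Ph2 * (F2 * (K * n1r))) * (F2 * (K * norm v))
          + Ph * ((F22 * (K * n1r)) * (K * norm v))"
        using b1 b2 b3 b4 b5 by linarith
      also have "\<dots> = R * norm v" unfolding R_def by (simp add: algebra_simps power2_eq_square)
      finally show "norm (blinfun_apply (Dop (\<lambda>y. h (f1 (Phi y))) y - Dop (\<lambda>y. h (f2 (Psi y))) y) v) \<le> R * norm v"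
        unfolding split .
    qed
  qed
  show ?thesis
    unfolding Let_def Lr_def[symmetric] L1eq Phi_def[symmetric] Psi_def[symmetric]
    using part1 part2 unfolding Ph_def Ph2_def F1_def F2_def F22_def e0_def d0_def n1f_def n1r_def
    by auto
qed

end
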